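(* Let $h:[0,\infty)^3\to[0,\infty)$ be upper semicontinuous and nondecreasing in each variable, and set $g(t)=h(t,t,t)$ for $t\ge0$. Then $g(t)<t$ for every $t>0$ if and only if $\lim_{n\to\infty}g^n(t)=0$ for every $t>0$ (where $g^n$ denotes the $n$-th iterate of $g$). *)

theory Defs
  imports "HOL-Analysis.Analysis"
begin

definition nonneg_orthant3 :: "(real \<times> real \<times> real) set" where
  "nonneg_orthant3 = {(x, y, z). 0 \<le> x \<and> 0 \<le> y \<and> 0 \<le> z}"

definition usc_on :: "'a::topological_space set \<Rightarrow> ('a \<Rightarrow> real) \<Rightarrow> bool" where
  "usc_on S f \<longleftrightarrow> (\<forall>x\<in>S. \<forall>c. f x < c \<longrightarrow> (\<forall>\<^sub>F y in at x within S. f y < c))"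

end

theory Submission
  imports Defs
begin

theorem lemma1:
  fixes h :: "real \<Rightarrow> real \<Rightarrow> real \<Rightarrow> real" and g :: "real \<Rightarrow> real"
  assumes nonneg: "\<And>x y z. 0 \<le> x \<Longrightarrow> 0 \<le> y \<Longrightarrow> 0 \<le> z \<Longrightarrow> 0 \<le> h x y z"
    and usc: "usc_on nonneg_orthant3 (\<lambda>(x, y, z). h x y z)"
    and mono: "\<And>x y z x' y' z'. 0 \<le> x \<Longrightarrow> 0 \<le> y \<Longrightarrow> 0 \<le> z \<Longrightarrow>
                 x \<le> x' \<Longrightarrow> y \<le> y' \<Longrightarrow> z \<le> z' \<Longrightarrow> h x y z \<le> h x' y' z'"
    and g_def: "\<And>t. 0 \<le> t \<Longrightarrow> g t = h t t t"
  shows "(\<forall>t>0. g t < t) \<longleftrightarrow> (\<forall>t>0. (\<lambda>n. (g ^^ n) t) \<longlonglongrightarrow> 0)"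
proof
  have gnn: "\<And>s. 0 \<le> s \<Longrightarrow> 0 \<le> g s" using nonneg g_def by simp
  have gmono: "\<And>s u. 0 \<le> s \<Longrightarrow> s \<le> u \<Longrightarrow> g s \<le> g u"
  proof -
    fix s u :: real assume su: "0 \<le> s" "s \<le> u"
    then show "g s \<le> g u" using mono[of s s s u u u] g_def[of s] g_def[of u] by simp
  qed
  assume A: "\<forall>t>0. g t < t"
  have g0: "g 0 = 0"
  proof (rule ccontr)
    assume "g 0 \<noteq> 0"
    then have p: "g 0 > 0" using gnn[of 0] by simp
    have "g 0 \<le> g (g 0)" using gmono[of 0 "g 0"] p by simp
    also have "\<dots> < g 0" using A p by blast
    finally show False by simp
  qed
  show "\<forall>t>0. (\<lambda>n. (g ^^ n) t) \<longlonglongrightarrow> 0"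
  proof (intro allI impI)
    fix t :: real assume t: "t > 0"
    define x where "x n = (g ^^ n) t" for n
    have xs: "x (Suc n) = g (x n)" for n by (simp add: x_def)
    have xnn: "0 \<le> x n" for n
      by (induction n) (use t in \<open>auto simp: xs x_def[of 0] gnn\<close>)
    have xdec: "x (Suc n) \<le> x n" for n
    proof (cases "x n = 0")
      case True then show ?thesis using g0 xs[of n] xnn[of n] by (simp only:)
    next
      case False
      then have "x n > 0" using xnn[of n] by simp
      then have "g (x n) < x n" using A by blast
      then show ?thesis using xs[of n] by (simp only: less_imp_le)
    qed
    have "decseq x" by (rule decseq_SucI) (use xdec in auto)
    then obtain L where L: "x \<longlonglongrightarrow> L" "\<forall>i. L \<le> x i"
      using decseq_convergent[of x 0] xnn by blast
    have L0: "L \<ge> 0" using LIMSEQ_le_const[OF L(1), of 0] xnn by blast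
    show "(\<lambda>n. (g ^^ n) t) \<longlonglongrightarrow> 0"
    proof (cases "L = 0")
      case True
      have xe: "x = (\<lambda>n. (g ^^ n) t)" by (rule ext) (simp add: x_def)
      show ?thesis using L(1) True xe by simp
    next
      case False
      then have Lp: "L > 0" using L0 by simp
      have gL: "g L < L" using A Lp by blast
      define c where "c = (g L + L) / 2"
      have c: "g L < c" "c < L" using gL by (auto simp: c_def)
      have xgt: "x n > L" for n
      proof (rule ccontr)
        assume "\<not> L < x n"
        then have "x n = L" using L(2)[rule_format, of n] by simp
        then have "x (Suc n) = g L" using xs by simp
        then show False using L(2)[rule_format, of "Suc n"] gL by simp
      qed
      have ev: "\<forall>\<^sub>F y in at (L, L, L) within nonneg_orthant3. (\<lambda>(x, y, z). h x y z) y < c"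
        using usc c(1) g_def[of L] L0 unfolding usc_on_def nonneg_orthant3_def by auto
      have tt: "((\<lambda>n. (x n, x n, x n)) \<longlongrightarrow> (L, L, L)) sequentially"
        using L(1) by (intro tendsto_Pair) auto
      have fl: "filterlim (\<lambda>n. (x n, x n, x n)) (at (L, L, L) within nonneg_orthant3) sequentially"
        unfolding filterlim_at using tt xgt xnn
        by (auto simp: nonneg_orthant3_def less_imp_neq[symmetric])
      have "\<forall>\<^sub>F n in sequentially. h (x n) (x n) (x n) < c"
        using eventually_compose_filterlim[OF ev fl] by simp
      then obtain n where "h (x n) (x n) (x n) < c" using eventually_sequentially by auto
      then have "x (Suc n) < c" using xs g_def xnn by simp
      then show ?thesis using L(2)[rule_format, of "Suc n"] c(2) by simp
    qed
  qed
next
  have gnn: "\<And>s. 0 \<le> s \<Longrightarrow> 0 \<le> g s" using nonneg g_def by simp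
  have gmono: "\<And>s u. 0 \<le> s \<Longrightarrow> s \<le> u \<Longrightarrow> g s \<le> g u"
  proof -
    fix s u :: real assume su: "0 \<le> s" "s \<le> u"
    then show "g s \<le> g u" using mono[of s s s u u u] g_def[of s] g_def[of u] by simp
  qed
  assume B: "\<forall>t>0. (\<lambda>n. (g ^^ n) t) \<longlonglongrightarrow> 0"
  show "\<forall>t>0. g t < t"
  proof (intro allI impI, rule ccontr)
    fix t :: real assume t: "t > 0" and "\<not> g t < t"
    then have gt: "g t \<ge> t" by simp
    have ge: "(g ^^ n) t \<ge> t" for n
    proof (induction n)
      case 0 then show ?case by simp
    next
      case (Suc n)
      have "t \<le> g t" by (rule gt)
      also have "\<dots> \<le> g ((g ^^ n) t)" using gmono[of t "(g ^^ n) t"] t Suc by simp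
      finally show ?case by simp
    qed
    have "t \<le> 0" using LIMSEQ_le_const[OF spec[OF B, THEN mp, OF t], of t] ge by blast
    then show False using t by simp
  qed
qed

end
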